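(* Let $p\geq 5$ be a prime and let $r$ be an integer with $1\leq r\leq p-1$ that is a quadratic nonresidue modulo $p$. Then for all $n\geq 0$, $d_{p-1}(pn+r)\equiv 0\pmod p$.
   Context: For each integer $k\geq 1$, the numbers $d_k(n)$ are defined by $\sum_{n\geq 0} d_k(n)q^n = \frac{f_2^k}{f_1^{3k+1}}$, where $f_r = \prod_{i\geq 1}(1-q^{ri})$. *)

theory Defs
  imports "HOL-Computational_Algebra.Formal_Power_Series" "HOL-Number_Theory.Number_Theory"
begin

(* f_r = prod_{i>=1} (1 - q^(r i)) as a formal power series over the rationals.
   Its n-th coefficient equals that of the finite product over 1 <= i <= n
   (the factors with i > n do not affect coefficients up to degree n, for r >= 1). *)
definition f_eta :: "nat \<Rightarrow> rat fps" where
  "f_eta r = Abs_fps (\<lambda>n. fps_nth (\<Prod>i\<in>{1..n}. (1 - fps_X ^ (r * i))) n)"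

definition d :: "nat \<Rightarrow> nat \<Rightarrow> rat" where
  "d k n = fps_nth (f_eta 2 ^ k * inverse (f_eta 1 ^ (3 * k + 1))) n"

end

theory Submission
  imports Defs
begin

unbundle fps_syntax



definition P :: "nat \<Rightarrow> nat \<Rightarrow> rat fps" where
  "P r M = (\<Prod>i\<in>{1..M}. (1 - fps_X ^ (r * i)))"

definition tr :: "nat \<Rightarrow> rat fps \<Rightarrow> rat fps \<Rightarrow> bool" where
  "tr N A B \<longleftrightarrow> (\<forall>n\<le>N. A $ n = B $ n)"

lemma tr_refl[simp]: "tr N A A" by (simp add: tr_def)
lemma tr_sym: "tr N A B \<Longrightarrow> tr N B A" by (simp add: tr_def)
lemma tr_trans: "tr N A B \<Longrightarrow> tr N B C \<Longrightarrow> tr N A C" by (simp add: tr_def)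

lemma tr_mult: assumes "tr N A B" "tr N C D" shows "tr N (A*C) (B*D)"
  unfolding tr_def
proof (intro allI impI)
  fix n assume n: "n \<le> N"
  show "(A*C) $ n = (B*D) $ n" unfolding fps_mult_nth
    by (rule sum.cong) (use assms n in \<open>auto simp: tr_def\<close>)
qed

lemma tr_add: "tr N A B \<Longrightarrow> tr N C D \<Longrightarrow> tr N (A+C) (B+D)" by (simp add: tr_def)
lemma tr_diff: "tr N A B \<Longrightarrow> tr N C D \<Longrightarrow> tr N (A-C) (B-D)" by (simp add: tr_def)
lemma tr_power: "tr N A B \<Longrightarrow> tr N (A^k) (B^k)"
  by (induction k) (auto intro: tr_mult)
lemma tr_sum: "(\<And>j. j \<in> S \<Longrightarrow> tr N (f j) (g j)) \<Longrightarrow> tr N (sum f S) (sum g S)"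
  by (simp add: tr_def fps_sum_nth)

lemma tr_Xpow: "N < e \<Longrightarrow> tr N (fps_X ^ e * A) 0"
  by (simp add: tr_def fps_X_power_mult_nth)

lemma tr_1_minus: "N < e \<Longrightarrow> tr N (1 - fps_X ^ e) 1"
  using tr_Xpow[of N e 1] by (simp add: tr_def)

lemma P_Suc: "P r (Suc M) = P r M * (1 - fps_X ^ (r * Suc M))"
  by (simp add: P_def prod.nat_ivl_Suc' mult.commute)

lemma P_0[simp]: "P r 0 = 1" by (simp add: P_def)

lemma tr_P_mono: assumes "r \<ge> 1" "N \<le> M" shows "tr N (P r M) (P r N)"
  using assms(2)
proof (induction M rule: dec_induct)
  case base then show ?case by simp
next
  case (step M)
  have "r * Suc M > N" using assms step by (metis Suc_le_eq less_le_trans mult_1 mult_le_mono1 step.hyps(1) le_imp_less_Suc)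
  then have "tr N (P r M * (1 - fps_X ^ (r * Suc M))) (P r N * 1)"
    using step.IH tr_1_minus tr_mult by blast
  then show ?case by (simp add: P_Suc)
qed

lemma f_eta_P: "f_eta r = Abs_fps (\<lambda>n. P r n $ n)"
  by (simp add: f_eta_def P_def)

lemma tr_f_eta: assumes "r \<ge> 1" "N \<le> M" shows "tr N (f_eta r) (P r M)"
  unfolding tr_def
proof (intro allI impI)
  fix n assume "n \<le> N"
  then have "tr n (P r M) (P r n)" using assms tr_P_mono by auto
  then show "f_eta r $ n = P r M $ n" by (simp add: f_eta_P tr_def)
qed




lemma P_nth0[simp]: "0 < r \<Longrightarrow> P r M $ 0 = 1"
  by (induction M) (auto simp: P_Suc)

lemma P_nz[simp]: "0 < r \<Longrightarrow> P r M \<noteq> 0"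
  using P_nth0[of r M] by (metis fps_zero_nth zero_neq_one)

fun qb :: "nat \<Rightarrow> nat \<Rightarrow> rat fps" where
  "qb m 0 = 1"
| "qb 0 (Suc j) = 0"
| "qb (Suc m) (Suc j) = qb m j + fps_X ^ (2 * Suc j) * qb m (Suc j)"

lemma qb_zero: "m < j \<Longrightarrow> qb m j = 0"
proof (induction m arbitrary: j)
  case 0 then show ?case by (cases j) auto
next
  case (Suc m) then show ?case by (cases j) auto
qed

lemma qb_prod: "j \<le> m \<Longrightarrow> qb m j * P 2 j * P 2 (m - j) = P 2 m"
proof (induction m arbitrary: j)
  case 0 then show ?case by simp
next
  case (Suc m)
  show ?case
  proof (cases j)
    case 0 then show ?thesis by simp
  next
    case (Suc i)
    with Suc.prems have im: "i \<le> m" by simp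
    have IH1: "qb m i * P 2 i * P 2 (m - i) = P 2 m" using Suc.IH im by simp
    define a where "a = (fps_X ^ (2 * Suc i) :: rat fps)"
    have PSi: "P 2 (Suc i) = P 2 i * (1 - a)" by (simp add: P_Suc a_def)
    have T2: "fps_X ^ (2 * Suc i) * qb m (Suc i) * P 2 (Suc i) * P 2 (m - i) = a * P 2 m * (1 - fps_X ^ (2 * (m - i)))"
    proof (cases "i < m")
      case True
      then have "m - i = Suc (m - Suc i)" by simp
      then have e1: "P 2 (m - i) = P 2 (m - Suc i) * (1 - fps_X ^ (2 * (m - i)))"
        by (metis P_Suc)
      have e2: "qb m (Suc i) * P 2 (Suc i) * P 2 (m - Suc i) = P 2 m" using Suc.IH True by simp
      have "fps_X ^ (2 * Suc i) * qb m (Suc i) * P 2 (Suc i) * P 2 (m - i) = a * (qb m (Suc i) * P 2 (Suc i) * P 2 (m - Suc i)) * (1 - fps_X ^ (2 * (m - i)))"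
        unfolding e1 a_def by (simp only: mult_ac)
      then show ?thesis unfolding e2 .
    next
      case False
      then have "m = i" using im by simp
      then show ?thesis by (simp add: qb_zero)
    qed
    have ab: "a * fps_X ^ (2 * (m - i)) = fps_X ^ (2 * Suc m)"
      unfolding a_def power_add[symmetric] using im by (simp add: algebra_simps)
    have "qb (Suc m) j * P 2 j * P 2 (Suc m - j)
        = (qb m i + fps_X ^ (2 * Suc i) * qb m (Suc i)) * P 2 (Suc i) * P 2 (m - i)"
      using Suc by simp
    also have "\<dots> = qb m i * P 2 (Suc i) * P 2 (m - i) + fps_X ^ (2 * Suc i) * qb m (Suc i) * P 2 (Suc i) * P 2 (m - i)"
      by (simp add: algebra_simps)
    also have "qb m i * P 2 (Suc i) * P 2 (m - i) = (qb m i * P 2 i * P 2 (m - i)) * (1 - a)"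
      unfolding PSi by (simp only: mult_ac)
    also have "\<dots> = P 2 m * (1 - a)" unfolding IH1 ..
    also note T2
    also have "P 2 m * (1 - a) + a * P 2 m * (1 - fps_X ^ (2 * (m - i))) = P 2 m * (1 - a * fps_X ^ (2 * (m - i)))"
      by (simp add: algebra_simps)
    also have "\<dots> = P 2 (Suc m)" by (simp add: ab P_Suc)
    finally show ?thesis .
  qed
qed

lemma qb_pascal2: "qb (Suc m) (Suc j) = fps_X ^ (2 * (m - j)) * qb m j + qb m (Suc j)"
proof (cases "j \<le> m")
  case False
  then show ?thesis by (simp add: qb_zero)
next
  case True
  define K where "K = P 2 (Suc j) * P 2 (m - j)"
  have Knz: "K \<noteq> 0" unfolding K_def by simp
  have L: "qb (Suc m) (Suc j) * K = P 2 (Suc m)"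
    using qb_prod[of "Suc j" "Suc m"] True by (simp add: K_def mult.assoc)
  define a where "a = (fps_X ^ (2 * Suc j) :: rat fps)"
  define b where "b = (fps_X ^ (2 * (m - j)) :: rat fps)"
  have ab: "b * a = fps_X ^ (2 * Suc m)"
    unfolding a_def b_def power_add[symmetric] using True by (simp add: algebra_simps)
  have R1: "b * qb m j * K = b * P 2 m * (1 - a)"
    using qb_prod[of j m] True by (simp add: K_def P_Suc a_def algebra_simps)
  have R2: "qb m (Suc j) * K = P 2 m * (1 - b)"
  proof (cases "j < m")
    case True
    then have "m - j = Suc (m - Suc j)" by simp
    then have e1: "P 2 (m - j) = P 2 (m - Suc j) * (1 - b)" unfolding b_def by (metis P_Suc)
    have e2: "qb m (Suc j) * P 2 (Suc j) * P 2 (m - Suc j) = P 2 m" using qb_prod True by simp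
    have "qb m (Suc j) * K = (qb m (Suc j) * P 2 (Suc j) * P 2 (m - Suc j)) * (1 - b)"
      unfolding K_def e1 by (simp only: mult_ac)
    then show ?thesis unfolding e2 .
  next
    case False
    then have "m = j" using \<open>j \<le> m\<close> by simp
    then show ?thesis by (simp add: qb_zero b_def)
  qed
  have "(b * qb m j + qb m (Suc j)) * K = b * P 2 m * (1 - a) + P 2 m * (1 - b)"
    using R1 R2 by (simp add: algebra_simps)
  also have "\<dots> = P 2 m * (1 - b * a)" by (simp add: algebra_simps)
  also have "\<dots> = P 2 (Suc m)" by (simp add: ab P_Suc)
  finally have "(b * qb m j + qb m (Suc j)) * K = qb (Suc m) (Suc j) * K" using L by simp
  then show ?thesis using Knz unfolding b_def by simp
qed




lemma qb_three:
  assumes "i \<le> m"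
  shows "qb (Suc (Suc m)) (Suc (Suc i)) = fps_X ^ (2 * (m - i)) * qb m i
     + (1 + fps_X ^ (2 * Suc m)) * qb m (Suc i) + fps_X ^ (2 * Suc (Suc i)) * qb m (Suc (Suc i))"
proof -
  have ab: "(fps_X ^ (2 * (m - i)) :: rat fps) * fps_X ^ (2 * Suc i) = fps_X ^ (2 * Suc m)"
    unfolding power_add[symmetric] using assms by (simp add: algebra_simps)
  have "qb (Suc (Suc m)) (Suc (Suc i)) = fps_X ^ (2 * (m - i)) * qb (Suc m) (Suc i) + qb (Suc m) (Suc (Suc i))"
    using qb_pascal2[of "Suc m" "Suc i"] by simp
  also have "\<dots> = fps_X ^ (2 * (m - i)) * qb m i + (fps_X ^ (2 * (m - i)) * fps_X ^ (2 * Suc i)) * qb m (Suc i)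
      + qb m (Suc i) + fps_X ^ (2 * Suc (Suc i)) * qb m (Suc (Suc i))"
    by (simp only: qb.simps(3) distrib_left mult.assoc add.assoc)
  also have "\<dots> = fps_X ^ (2 * (m - i)) * qb m i
     + (1 + fps_X ^ (2 * Suc m)) * qb m (Suc i) + fps_X ^ (2 * Suc (Suc i)) * qb m (Suc (Suc i))"
    unfolding ab by (simp add: algebra_simps)
  finally show ?thesis .
qed

lemma qb_three1:
  "qb (Suc (Suc m)) (Suc 0) = 1 + fps_X ^ (2 * Suc m) + fps_X ^ (2 * Suc 0) * qb m (Suc 0)"
proof -
  have "qb (Suc (Suc m)) (Suc 0) = fps_X ^ (2 * (Suc m - 0)) * qb (Suc m) 0 + qb (Suc m) (Suc 0)"
    by (rule qb_pascal2)
  also have "\<dots> = fps_X ^ (2 * Suc m) + (qb m 0 + fps_X ^ (2 * Suc 0) * qb m (Suc 0))"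
    by (simp only: qb.simps minus_nat.diff_0 mult_1_right)
  finally show ?thesis by (simp only: qb.simps add_ac)
qed

definition e :: "nat \<Rightarrow> nat \<Rightarrow> nat" where "e n j = nat ((int j - int n)^2)"

definition c :: "nat \<Rightarrow> nat \<Rightarrow> rat fps" where "c n j = qb (2 * n) j * fps_X ^ (e n j)"

lemma c_zero: "2 * n < j \<Longrightarrow> c n j = 0" by (simp add: c_def qb_zero)

lemma e_int: "int (e n j) = (int j - int n)^2" by (simp add: e_def)

lemma e_eq1: assumes "i \<le> 2 * n" shows "2 * (2 * n - i) + e (Suc n) (Suc (Suc i)) = 2 * n + 1 + e n i"
proof -
  have "int (2 * (2 * n - i) + e (Suc n) (Suc (Suc i))) = int (2 * n + 1 + e n i)"
    using assms by (simp add: e_int of_nat_diff power2_eq_square algebra_simps)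
  then show ?thesis by (simp only: of_nat_eq_iff)
qed
lemma e_eq2: "e (Suc n) (Suc j) = e n j"
  unfolding e_def by (simp add: algebra_simps)
lemma e_eq3: "2 * Suc (Suc i) + e (Suc n) (Suc (Suc i)) = 2 * n + 1 + e n (Suc (Suc i))"
proof -
  have "int (2 * Suc (Suc i) + e (Suc n) (Suc (Suc i))) = int (2 * n + 1 + e n (Suc (Suc i)))"
    by (simp add: e_int power2_eq_square algebra_simps)
  then show ?thesis by (simp only: of_nat_eq_iff)
qed
lemma e_eq4: "2 * Suc 0 + e (Suc n) (Suc 0) = 2 * n + 1 + e n (Suc 0)"
proof -
  have "int (2 * Suc 0 + e (Suc n) (Suc 0)) = int (2 * n + 1 + e n (Suc 0))"
    by (simp add: e_int power2_eq_square algebra_simps)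
  then show ?thesis by (simp only: of_nat_eq_iff)
qed
lemma e_eq5: "e (Suc n) 0 = 2 * n + 1 + e n 0"
proof -
  have "int (e (Suc n) 0) = int (2 * n + 1 + e n 0)"
    by (simp add: e_int power2_eq_square algebra_simps)
  then show ?thesis by (simp only: of_nat_eq_iff)
qed




lemma c_rec0: "c (Suc n) 0 = fps_X ^ (2 * n + 1) * c n 0"
  by (simp add: c_def e_eq5 power_add)

lemma c_rec1: "c (Suc n) (Suc 0) = fps_X ^ (2 * n + 1) * c n (Suc 0) + (1 + fps_X ^ (4 * n + 2)) * c n 0"
proof -
  have h: "(fps_X ^ (2 * Suc 0) :: rat fps) * fps_X ^ (e (Suc n) (Suc 0)) = fps_X ^ (2 * n + 1) * fps_X ^ (e n (Suc 0))"
    unfolding power_add[symmetric] e_eq4 ..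
  have h2: "e (Suc n) (Suc 0) = e n 0" by (rule e_eq2)
  have m: "2 * Suc n = Suc (Suc (2 * n))" "2 * Suc (2 * n) = 4 * n + 2" by simp_all
  have "c (Suc n) (Suc 0) = (1 + fps_X ^ (4 * n + 2) + fps_X ^ (2 * Suc 0) * qb (2 * n) (Suc 0)) * fps_X ^ (e (Suc n) (Suc 0))"
    unfolding c_def m(1) qb_three1 m(2) ..
  also have "\<dots> = (1 + fps_X ^ (4 * n + 2)) * fps_X ^ (e (Suc n) (Suc 0)) + qb (2 * n) (Suc 0) * (fps_X ^ (2 * Suc 0) * fps_X ^ (e (Suc n) (Suc 0)))"
    by (simp add: algebra_simps)
  also have "\<dots> = fps_X ^ (2 * n + 1) * c n (Suc 0) + (1 + fps_X ^ (4 * n + 2)) * c n 0"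
    unfolding h unfolding h2 c_def by (simp add: mult_ac)
  finally show ?thesis .
qed

lemma c_rec2:
  assumes "i \<le> 2 * n"
  shows "c (Suc n) (Suc (Suc i)) = fps_X ^ (2 * n + 1) * c n (Suc (Suc i)) + (1 + fps_X ^ (4 * n + 2)) * c n (Suc i) + fps_X ^ (2 * n + 1) * c n i"
proof -
  let ?E = "e (Suc n) (Suc (Suc i))"
  have h1: "(fps_X ^ (2 * (2 * n - i)) :: rat fps) * fps_X ^ ?E = fps_X ^ (2 * n + 1) * fps_X ^ (e n i)"
    unfolding power_add[symmetric] e_eq1[OF assms] ..
  have h3: "(fps_X ^ (2 * Suc (Suc i)) :: rat fps) * fps_X ^ ?E = fps_X ^ (2 * n + 1) * fps_X ^ (e n (Suc (Suc i)))"
    unfolding power_add[symmetric] e_eq3 ..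
  have h2: "?E = e n (Suc i)" by (rule e_eq2)
  have m: "2 * Suc n = Suc (Suc (2 * n))" "2 * Suc (2 * n) = 4 * n + 2" by simp_all
  have "c (Suc n) (Suc (Suc i)) = (fps_X ^ (2 * (2 * n - i)) * qb (2 * n) i
     + (1 + fps_X ^ (4 * n + 2)) * qb (2 * n) (Suc i) + fps_X ^ (2 * Suc (Suc i)) * qb (2 * n) (Suc (Suc i))) * fps_X ^ ?E"
    unfolding c_def m(1) qb_three[OF assms] m(2) ..
  also have "\<dots> = qb (2 * n) i * (fps_X ^ (2 * (2 * n - i)) * fps_X ^ ?E)
     + (1 + fps_X ^ (4 * n + 2)) * qb (2 * n) (Suc i) * fps_X ^ ?E + qb (2 * n) (Suc (Suc i)) * (fps_X ^ (2 * Suc (Suc i)) * fps_X ^ ?E)"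
    by (simp add: algebra_simps)
  also have "\<dots> = fps_X ^ (2 * n + 1) * c n (Suc (Suc i)) + (1 + fps_X ^ (4 * n + 2)) * c n (Suc i) + fps_X ^ (2 * n + 1) * c n i"
    unfolding h1 h3 unfolding h2 c_def by (simp add: mult_ac)
  finally show ?thesis .
qed

definition T :: "nat \<Rightarrow> rat fps" where "T n = (\<Sum>j\<le>2 * n. (-1) ^ j * c n j)"

definition Od :: "nat \<Rightarrow> rat fps" where "Od n = (\<Prod>i\<in>{1..n}. (1 - fps_X ^ (2 * i - 1)))"

lemma sum_ext: "m \<ge> 2 * n \<Longrightarrow> (\<Sum>j\<le>m. (-1) ^ j * c n j) = T n"
  unfolding T_def by (rule sum.mono_neutral_right) (auto simp: c_zero)

lemma T_Suc: "T (Suc n) = - ((1 - fps_X ^ (2 * n + 1))^2) * T n"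
proof -
  define a :: "rat fps" where "a = fps_X ^ (2 * n + 1)"
  define b :: "rat fps" where "b = 1 + fps_X ^ (4 * n + 2)"
  have rec: "c (Suc n) j = a * c n j + (case j of 0 \<Rightarrow> 0 | Suc k \<Rightarrow> b * c n k)
     + (case j of 0 \<Rightarrow> 0 | Suc 0 \<Rightarrow> 0 | Suc (Suc k) \<Rightarrow> a * c n k)" if "j \<le> 2 * n + 2" for j
  proof (cases j)
    case 0 then show ?thesis by (simp add: c_rec0 a_def)
  next
    case (Suc k)
    show ?thesis
    proof (cases k)
      case 0 then show ?thesis using Suc by (simp add: c_rec1 a_def b_def)
    next
      case (Suc i)
      then show ?thesis using \<open>j = Suc k\<close> that c_rec2[of i n] by (simp add: a_def b_def add_ac)
    qed
  qed
  have "T (Suc n) = (\<Sum>j\<le>Suc (Suc (2 * n)). (-1) ^ j * c (Suc n) j)"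
    unfolding T_def by simp
  also have "\<dots> = (\<Sum>j\<le>Suc (Suc (2 * n)). a * ((-1) ^ j * c n j) + (-1) ^ j * (case j of 0 \<Rightarrow> 0 | Suc k \<Rightarrow> b * c n k)
     + (-1) ^ j * (case j of 0 \<Rightarrow> 0 | Suc 0 \<Rightarrow> 0 | Suc (Suc k) \<Rightarrow> a * c n k))"
    by (rule sum.cong) (auto simp: rec algebra_simps)
  also have "\<dots> = a * (\<Sum>j\<le>Suc (Suc (2 * n)). (-1) ^ j * c n j)
     + (\<Sum>j\<le>Suc (Suc (2 * n)). (-1) ^ j * (case j of 0 \<Rightarrow> 0 | Suc k \<Rightarrow> b * c n k))
     + (\<Sum>j\<le>Suc (Suc (2 * n)). (-1) ^ j * (case j of 0 \<Rightarrow> 0 | Suc 0 \<Rightarrow> 0 | Suc (Suc k) \<Rightarrow> a * c n k))"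
    by (simp only: sum.distrib sum_distrib_left)
  also have "(\<Sum>j\<le>Suc (Suc (2 * n)). (-1) ^ j * c n j) = T n" by (rule sum_ext) simp
  also have "(\<Sum>j\<le>Suc (Suc (2 * n)). (-1) ^ j * (case j of 0 \<Rightarrow> 0 | Suc k \<Rightarrow> b * c n k)) = - b * T n"
  proof -
    have "(\<Sum>j\<le>Suc (Suc (2 * n)). (-1) ^ j * (case j of 0 \<Rightarrow> 0 | Suc k \<Rightarrow> b * c n k))
        = (\<Sum>j\<le>Suc (2 * n). (-1) ^ Suc j * (b * c n j))"
      by (subst sum.atMost_Suc_shift) simp
    also have "\<dots> = - b * (\<Sum>j\<le>Suc (2 * n). (-1) ^ j * c n j)"
      by (simp add: sum_distrib_left algebra_simps flip: sum_negf)
    also have "(\<Sum>j\<le>Suc (2 * n). (-1) ^ j * c n j) = T n" by (rule sum_ext) simp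
    finally show ?thesis .
  qed
  also have "(\<Sum>j\<le>Suc (Suc (2 * n)). (-1) ^ j * (case j of 0 \<Rightarrow> 0 | Suc 0 \<Rightarrow> 0 | Suc (Suc k) \<Rightarrow> a * c n k)) = a * T n"
  proof -
    have "(\<Sum>j\<le>Suc (Suc (2 * n)). (-1) ^ j * (case j of 0 \<Rightarrow> 0 | Suc 0 \<Rightarrow> 0 | Suc (Suc k) \<Rightarrow> a * c n k))
        = (\<Sum>j\<le>2 * n. (-1) ^ j * (a * c n j))"
      by (subst sum.atMost_Suc_shift, subst sum.atMost_Suc_shift) simp
    also have "\<dots> = a * T n" by (simp add: T_def sum_distrib_left algebra_simps)
    finally show ?thesis .
  qed
  finally have "T (Suc n) = (2 * a - b) * T n" by (simp add: algebra_simps)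
  moreover have "2 * a - b = - ((1 - fps_X ^ (2 * n + 1))^2)"
    unfolding a_def b_def by (simp add: power2_eq_square algebra_simps flip: power_add)
  ultimately show ?thesis by simp
qed

lemma Od_Suc: "Od (Suc n) = Od n * (1 - fps_X ^ (2 * n + 1))"
  by (simp add: Od_def prod.nat_ivl_Suc' mult.commute)

lemma T_O: "T n = (-1) ^ n * (Od n)^2"
proof (induction n)
  case 0 then show ?case by (simp add: T_def c_def e_def Od_def)
next
  case (Suc n) then show ?case by (simp add: T_Suc Od_Suc power2_eq_square algebra_simps)
qed




definition psi :: "nat \<Rightarrow> rat fps" where "psi n = (\<Sum>j\<le>2 * n. (-1) ^ (j + n) * fps_X ^ (e n j))"

lemma P1_split: "P 1 (2 * n) = Od n * P 2 n"
proof (induction n)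
  case 0 then show ?case by (simp add: Od_def)
next
  case (Suc n)
  have "P 1 (2 * Suc n) = P 1 (2 * n) * (1 - fps_X ^ (2 * n + 1)) * (1 - fps_X ^ (2 * Suc n))"
    by (simp add: P_Suc)
  then show ?case using Suc by (simp add: Od_Suc P_Suc mult_ac)
qed

lemma e_small:
  assumes "e n j \<le> N" shows "n \<le> j + N" "j \<le> n + N"
proof -
  have "(int j - int n)^2 \<le> int N" using assms e_int[of n j] by linarith
  moreover have "\<bar>x\<bar> \<le> x^2" for x :: int
  proof (cases "x = 0")
    case False
    then have "1 \<le> \<bar>x\<bar>" by linarith
    then have "\<bar>x\<bar> * 1 \<le> \<bar>x\<bar> * \<bar>x\<bar>" by (intro mult_left_mono) auto
    then show ?thesis by (simp add: power2_eq_square)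
  qed simp
  then have "\<bar>int j - int n\<bar> \<le> (int j - int n)^2" .
  ultimately show "n \<le> j + N" "j \<le> n + N" by linarith+
qed

lemma tr_PP: "1 \<le> r \<Longrightarrow> N \<le> a \<Longrightarrow> N \<le> b \<Longrightarrow> tr N (P r a) (P r b)"
  using tr_f_eta[of r N a] tr_f_eta[of r N b] tr_sym tr_trans by blast

lemma gauss_tr: "tr N ((f_eta 1)^2) (f_eta 2 * psi (2 * N))"
proof -
  define n where "n = 2 * N"
  have t1: "tr N (f_eta 1) (P 1 (2 * n))" by (rule tr_f_eta) (auto simp: n_def)
  have t2: "tr N (f_eta 2) (P 2 n)" by (rule tr_f_eta) (auto simp: n_def)
  have Od2: "(Od n)^2 = (-1)^n * T n"
    using T_O[of n] by (simp add: power_add[symmetric] mult.assoc[symmetric] flip: power_mult_distrib)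
  have sq: "(P 1 (2 * n))^2 = (\<Sum>j\<le>2 * n. (-1) ^ (j + n) * c n j * (P 2 n)^2)"
  proof -
    have "(P 1 (2 * n))^2 = (Od n)^2 * (P 2 n)^2" unfolding P1_split by (simp add: power_mult_distrib)
    also have "\<dots> = (-1)^n * T n * (P 2 n)^2" by (simp add: Od2)
    also have "\<dots> = (\<Sum>j\<le>2 * n. (-1) ^ (j + n) * c n j * (P 2 n)^2)"
      unfolding T_def sum_distrib_left sum_distrib_right by (simp add: power_add mult_ac)
    finally show ?thesis .
  qed
  have terms: "tr N ((-1) ^ (j + n) * c n j * (P 2 n)^2) ((-1) ^ (j + n) * fps_X ^ (e n j) * P 2 n)"
    if j: "j \<le> 2 * n" for j
  proof -
    have l: "(-1) ^ (j + n) * c n j * (P 2 n)^2 = fps_X ^ (e n j) * ((-1) ^ (j + n) * (qb (2 * n) j * P 2 n * P 2 n))"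
      by (simp add: c_def power2_eq_square mult_ac)
    have r: "(-1) ^ (j + n) * fps_X ^ (e n j) * P 2 n = fps_X ^ (e n j) * ((-1) ^ (j + n) * P 2 n)"
      by (simp add: mult_ac)
    have "tr N (fps_X ^ (e n j) * ((-1) ^ (j + n) * (qb (2 * n) j * P 2 n * P 2 n))) (fps_X ^ (e n j) * ((-1) ^ (j + n) * P 2 n))"
    proof (cases "N < e n j")
      case True
      then show ?thesis using tr_Xpow[OF True] tr_sym tr_trans by blast
    next
      case False
      then have es: "e n j \<le> N" by simp
      from e_small[OF es] have jN: "N \<le> j" "N \<le> 2 * n - j" using j by (auto simp: n_def)
      have a: "tr N (qb (2 * n) j * P 2 n * P 2 n) (qb (2 * n) j * P 2 j * P 2 (2 * n - j))"
        by (intro tr_mult tr_refl tr_PP) (use jN in \<open>auto simp: n_def\<close>)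
      have b: "qb (2 * n) j * P 2 j * P 2 (2 * n - j) = P 2 (2 * n)" using qb_prod j by simp
      have c: "tr N (P 2 (2 * n)) (P 2 n)" by (rule tr_PP) (auto simp: n_def)
      have "tr N (qb (2 * n) j * P 2 n * P 2 n) (P 2 n)" using a b c tr_trans by metis
      then show ?thesis by (intro tr_mult tr_refl)
    qed
    then show ?thesis unfolding l r .
  qed
  have A0: "tr N ((f_eta 1)^2) (\<Sum>j\<le>2 * n. (-1) ^ (j + n) * c n j * (P 2 n)^2)"
    using tr_power[OF t1, of 2] unfolding sq .
  have A: "tr N ((f_eta 1)^2) (\<Sum>j\<le>2 * n. (-1) ^ (j + n) * fps_X ^ (e n j) * P 2 n)"
  proof -
    have "tr N (\<Sum>j\<le>2 * n. (-1) ^ (j + n) * c n j * (P 2 n)^2) (\<Sum>j\<le>2 * n. (-1) ^ (j + n) * fps_X ^ (e n j) * P 2 n)"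
      by (rule tr_sum) (rule terms, simp)
    then show ?thesis using A0 tr_trans by blast
  qed
  have "(\<Sum>j\<le>2 * n. (-1) ^ (j + n) * fps_X ^ (e n j) * P 2 n) = psi n * P 2 n"
    unfolding psi_def sum_distrib_right ..
  moreover have "tr N (psi n * P 2 n) (psi n * f_eta 2)" by (intro tr_mult tr_refl tr_sym[OF t2])
  ultimately have "tr N ((f_eta 1)^2) (psi n * f_eta 2)" using A tr_trans by metis
  then show ?thesis by (simp add: n_def mult.commute)
qed




definition zp :: "nat \<Rightarrow> rat \<Rightarrow> bool" where "zp p x \<longleftrightarrow> (\<exists>m::int. x = of_int (int p * m))"
definition intg :: "rat fps \<Rightarrow> bool" where "intg A \<longleftrightarrow> (\<forall>n. A $ n \<in> \<int>)"
definition zc :: "nat \<Rightarrow> rat fps \<Rightarrow> rat fps \<Rightarrow> bool" where "zc p A B \<longleftrightarrow> (\<forall>n. zp p ((A - B) $ n))"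

lemma zp_0[simp]: "zp p 0" by (auto simp: zp_def intro: exI[of _ 0])
lemma zp_add: "zp p x \<Longrightarrow> zp p y \<Longrightarrow> zp p (x + y)"
  unfolding zp_def by (metis distrib_left of_int_add)
lemma zp_diff: "zp p x \<Longrightarrow> zp p y \<Longrightarrow> zp p (x - y)"
  unfolding zp_def by (metis right_diff_distrib of_int_diff)
lemma zp_uminus: "zp p x \<Longrightarrow> zp p (- x)"
  using zp_diff[of p 0 x] by simp
lemma zp_multI: "zp p x \<Longrightarrow> y \<in> \<int> \<Longrightarrow> zp p (x * y)"
  unfolding zp_def by (auto elim!: Ints_cases) (metis mult.assoc of_int_mult)
lemma zp_multI2: "zp p x \<Longrightarrow> y \<in> \<int> \<Longrightarrow> zp p (y * x)"
  using zp_multI by (simp add: mult.commute)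
lemma zp_sum: "(\<And>i. i \<in> S \<Longrightarrow> zp p (f i)) \<Longrightarrow> zp p (sum f S)"
  by (induction S rule: infinite_finite_induct) (auto intro: zp_add)
lemma zp_Ints: "zp p x \<Longrightarrow> x \<in> \<int>" unfolding zp_def by auto
lemma zp_of_nat: assumes "p dvd m" shows "zp p (of_nat m)"
proof -
  obtain k where "m = p * k" using assms by (elim dvdE)
  then show ?thesis unfolding zp_def by (intro exI[of _ "int k"]) simp
qed

lemma intg_mult: "intg A \<Longrightarrow> intg B \<Longrightarrow> intg (A * B)"
  unfolding intg_def fps_mult_nth by (auto intro!: Ints_sum Ints_mult)
lemma intg_add: "intg A \<Longrightarrow> intg B \<Longrightarrow> intg (A + B)"
  unfolding intg_def by auto
lemma intg_diff: "intg A \<Longrightarrow> intg B \<Longrightarrow> intg (A - B)"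
  unfolding intg_def by auto
lemma intg_1[simp]: "intg 1" unfolding intg_def by simp
lemma intg_Xp[simp]: "intg (fps_X ^ k)" unfolding intg_def by simp
lemma intg_power: "intg A \<Longrightarrow> intg (A ^ k)"
  by (induction k) (auto intro: intg_mult)
lemma intg_neg1p[simp]: "intg ((-1) ^ k)"
  by (intro intg_power) (simp add: intg_def)
lemma intg_sum: "(\<And>i. i \<in> S \<Longrightarrow> intg (f i)) \<Longrightarrow> intg (sum f S)"
  unfolding intg_def fps_sum_nth by (auto intro!: Ints_sum)
lemma intg_P[simp]: "intg (P r M)"
  by (induction M) (auto simp: P_Suc intro!: intg_mult intg_diff)
lemma intg_f_eta[simp]: "intg (f_eta r)"
  unfolding intg_def f_eta_P using intg_P unfolding intg_def by simp
lemma intg_psi[simp]: "intg (psi n)"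
  unfolding psi_def by (auto intro!: intg_sum intg_mult)

lemma zc_mult: assumes "zc p A B" "zc p C D" "intg A" "intg D" shows "zc p (A * C) (B * D)"
  unfolding zc_def
proof
  fix n
  have "A * C - B * D = A * (C - D) + (A - B) * D" by (simp add: algebra_simps)
  moreover have "zp p ((A * (C - D)) $ n)"
    unfolding fps_mult_nth using assms unfolding zc_def intg_def by (auto intro!: zp_sum zp_multI2)
  moreover have "zp p (((A - B) * D) $ n)"
    unfolding fps_mult_nth using assms unfolding zc_def intg_def by (auto intro!: zp_sum zp_multI)
  ultimately show "zp p ((A * C - B * D) $ n)" by (simp add: zp_add)
qed

lemma zc_refl[simp]: "zc p A A" by (simp add: zc_def)

lemma zc_power: "zc p A B \<Longrightarrow> intg A \<Longrightarrow> intg B \<Longrightarrow> zc p (A ^ k) (B ^ k)"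
  by (induction k) (auto intro: zc_mult intg_power)

lemma frob1:
  assumes "prime p" "odd p"
  shows "zp p (((1 - fps_X ^ a) ^ p - (1 - fps_X ^ (p * a))) $ n)"
proof -
  define g where "g k = of_nat (p choose k) * (-1) ^ k * (if n = a * k then 1 else 0 :: rat)" for k
  have neg1: "(-1 :: rat fps) ^ k = fps_const ((-1) ^ k)" for k
  proof -
    have h: "(-1 :: rat fps) = fps_const (-1)"
      by (simp only: fps_const_neg[symmetric] fps_const_1_eq_1)
    show ?thesis by (simp only: h fps_const_power)
  qed
  have trm: "(of_nat m * (- (fps_X ^ a)) ^ k * 1 ^ (p - k) :: rat fps) $ n = of_nat m * (-1)^k * (if n = a * k then 1 else 0)" for m k
  proof -
    have "(- (fps_X ^ a :: rat fps)) ^ k = fps_const ((-1)^k) * fps_X ^ (a * k)"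
      by (subst power_minus) (simp only: neg1 power_mult)
    moreover have "(of_nat m :: rat fps) = fps_const (of_nat m)" by (simp add: fps_of_nat)
    ultimately show ?thesis by (simp add: mult.assoc)
  qed
  have "(1 - fps_X ^ a :: rat fps) ^ p = (- (fps_X ^ a) + 1) ^ p" by simp
  also have "\<dots> = (\<Sum>k\<le>p. of_nat (p choose k) * (- (fps_X ^ a)) ^ k * 1 ^ (p - k))"
    by (rule binomial_ring)
  finally have ex: "(1 - fps_X ^ a :: rat fps) ^ p = (\<Sum>k\<le>p. of_nat (p choose k) * (- (fps_X ^ a)) ^ k * 1 ^ (p - k))" .
  have cf: "((1 - fps_X ^ a :: rat fps) ^ p) $ n = (\<Sum>k\<le>p. g k)"
    unfolding g_def by (simp only: ex fps_sum_nth trm)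
  have p0: "p \<noteq> 0" using assms by auto
  have S: "{..p} = insert 0 (insert p {1..<p})" using p0 by auto
  have "(\<Sum>k\<le>p. g k) = g 0 + (g p + (\<Sum>k\<in>{1..<p}. g k))"
    unfolding S using p0 by (simp add: sum.insert)
  moreover have "g 0 = (1 :: rat fps) $ n" by (simp add: g_def)
  moreover have "g p = - ((fps_X ^ (p * a) :: rat fps) $ n)"
    using assms(2) by (simp add: g_def mult.commute)
  moreover have "zp p (\<Sum>k\<in>{1..<p}. g k)"
  proof (rule zp_sum)
    fix k assume k: "k \<in> {1..<p}"
    then have "p dvd (p choose k)" using assms(1) p0 by (intro dvd_choose_prime) auto
    then have "zp p (of_nat (p choose k))" by (rule zp_of_nat)
    then show "zp p (g k)" unfolding g_def by (intro zp_multI) auto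
  qed
  ultimately show ?thesis using cf by simp
qed




lemma neg1_fps: "(-1 :: rat fps) ^ k = fps_const ((-1) ^ k)"
proof -
  have h: "(-1 :: rat fps) = fps_const (-1)"
    by (simp only: fps_const_neg[symmetric] fps_const_1_eq_1)
  show ?thesis by (simp only: h fps_const_power)
qed

lemma intg_X[simp]: "intg fps_X" unfolding intg_def by (simp add: fps_X_def)

lemma frob_P:
  assumes "prime p" "odd p"
  shows "zc p ((P r M) ^ p) (P (p * r) M)"
proof (induction M)
  case 0 then show ?case by simp
next
  case (Suc M)
  have f: "zc p ((1 - fps_X ^ (r * Suc M)) ^ p) (1 - fps_X ^ (p * (r * Suc M)))"
    unfolding zc_def using frob1[OF assms] by blast
  have "zc p ((P r M) ^ p * (1 - fps_X ^ (r * Suc M)) ^ p) (P (p * r) M * (1 - fps_X ^ (p * (r * Suc M))))"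
    by (rule zc_mult[OF Suc f]) (auto intro!: intg_power intg_diff)
  moreover have "(P r (Suc M)) ^ p = (P r M) ^ p * (1 - fps_X ^ (r * Suc M)) ^ p"
    by (simp only: P_Suc power_mult_distrib)
  moreover have "P (p * r) (Suc M) = P (p * r) M * (1 - fps_X ^ (p * (r * Suc M)))"
    by (simp only: P_Suc mult.assoc)
  ultimately show ?case by simp
qed

lemma frob_eta:
  assumes "prime p" "odd p" "1 \<le> r"
  shows "zc p ((f_eta r) ^ p) (f_eta (p * r))"
  unfolding zc_def
proof
  fix n
  have "0 < p" using prime_gt_0_nat[OF assms(1)] .
  then have p1: "1 \<le> p * r" using assms(3) by simp
  have "tr n ((f_eta r) ^ p) ((P r n) ^ p)" by (intro tr_power tr_f_eta assms(3)) simp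
  moreover have "tr n (f_eta (p * r)) (P (p * r) n)" by (intro tr_f_eta p1) simp
  ultimately have "((f_eta r) ^ p - f_eta (p * r)) $ n = ((P r n) ^ p - P (p * r) n) $ n"
    by (simp add: tr_def)
  then show "zp p (((f_eta r) ^ p - f_eta (p * r)) $ n)"
    using frob_P[OF assms(1,2), of r n] unfolding zc_def by simp
qed

definition sp :: "nat \<Rightarrow> rat fps \<Rightarrow> bool" where "sp p A \<longleftrightarrow> (\<forall>i. \<not> p dvd i \<longrightarrow> A $ i = 0)"

lemma sp_mult: assumes "sp p A" "sp p B" shows "sp p (A * B)"
  unfolding sp_def
proof (intro allI impI)
  fix n assume n: "\<not> p dvd n"
  show "(A * B) $ n = 0" unfolding fps_mult_nth
  proof (rule sum.neutral, intro ballI)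
    fix i assume i: "i \<in> {0..n}"
    show "A $ i * B $ (n - i) = 0"
    proof (cases "p dvd i")
      case True
      have "\<not> p dvd (n - i)"
      proof
        assume "p dvd (n - i)"
        with True have "p dvd (i + (n - i))" by (rule dvd_add)
        with i n show False by simp
      qed
      then show ?thesis using assms(2) by (simp add: sp_def)
    next
      case False then show ?thesis using assms(1) by (simp add: sp_def)
    qed
  qed
qed

lemma sp_1[simp]: "sp p 1" by (simp add: sp_def)
lemma sp_power: "sp p A \<Longrightarrow> sp p (A ^ k)" by (induction k) (auto intro: sp_mult)
lemma sp_factor: "sp p (1 - fps_X ^ (p * t))" by (auto simp: sp_def)
lemma sp_P: "sp p (P (p * s) M)"
proof (induction M)
  case 0 then show ?case by simp
next
  case (Suc M)
  have "sp p (1 - fps_X ^ (p * (s * Suc M)))" by (rule sp_factor)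
  moreover have "P (p * s) (Suc M) = P (p * s) M * (1 - fps_X ^ (p * (s * Suc M)))"
    by (simp only: P_Suc mult.assoc)
  ultimately show ?case using Suc sp_mult by metis
qed
lemma sp_f_eta: "sp p (f_eta (p * s))"
  using sp_P[of p s] by (simp add: sp_def f_eta_P)

lemma e_sq: "e n j = (if n \<le> j then (j - n)^2 else (n - j)^2)"
proof -
  have "int (e n j) = int (if n \<le> j then (j - n)^2 else (n - j)^2)"
    by (simp add: e_int of_nat_diff power2_commute)
  then show ?thesis by (simp only: of_nat_eq_iff)
qed

lemma psi_nth: assumes "\<not> (\<exists>k. m = k^2)" shows "psi N $ m = 0"
proof -
  have z: "(fps_const ((-1) ^ (j + N)) * fps_X ^ e N j) $ m = 0" for j
  proof -
    have "m \<noteq> e N j" using assms by (auto simp: e_sq)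
    then show ?thesis by simp
  qed
  show ?thesis unfolding psi_def fps_sum_nth neg1_fps by (intro sum.neutral ballI z)
qed




lemma sum_split_last: "(\<Sum>i=0..n. f i) = (\<Sum>i\<in>{0..<n}. f i) + f (n::nat)"
proof -
  have "{0..n} = insert n {0..<n}" by auto
  then show ?thesis by (simp add: add.commute)
qed

lemma intg_quot:
  assumes "A * B = C" "B $ 0 = 1" "intg B" "intg C"
  shows "intg A"
  unfolding intg_def
proof
  fix n show "A $ n \<in> \<int>"
  proof (induction n rule: less_induct)
    case (less n)
    have "C $ n = (\<Sum>i\<in>{0..<n}. A $ i * B $ (n - i)) + A $ n"
      using assms(1,2) by (auto simp: fps_mult_nth sum_split_last)
    then have "A $ n = C $ n - (\<Sum>i\<in>{0..<n}. A $ i * B $ (n - i))" by simp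
    also have "\<dots> \<in> \<int>"
      using assms(3,4) less unfolding intg_def by (auto intro!: Ints_diff Ints_sum Ints_mult)
    finally show ?case .
  qed
qed

lemma zp_quot:
  assumes W: "W = D * G" and G0: "G $ 0 = 1" and "intg G" "intg D" "sp p G" "r < p"
    and Z: "\<And>n. zp p (W $ (p * n + r))"
  shows "zp p (D $ (p * n + r))"
proof (induction n rule: less_induct)
  case (less n)
  define N where "N = p * n + r"
  have split: "W $ N = (\<Sum>i\<in>{0..<N}. D $ i * G $ (N - i)) + D $ N"
    using W G0 by (auto simp: fps_mult_nth sum_split_last)
  have "zp p (\<Sum>i\<in>{0..<N}. D $ i * G $ (N - i))"
  proof (rule zp_sum)
    fix i assume i: "i \<in> {0..<N}"
    show "zp p (D $ i * G $ (N - i))"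
    proof (cases "p dvd (N - i)")
      case False
      then show ?thesis using assms(5) by (simp add: sp_def)
    next
      case True
      have "N mod p = i mod p" using True i by (subst mod_eq_dvd_iff_nat) auto
      then have "i mod p = N mod p" by simp
      also have "N mod p = r" using assms(6) by (simp add: N_def)
      finally have im: "i mod p = r" .
      define t where "t = i div p"
      have it: "i = p * t + r" using im div_mult_mod_eq[of i p] unfolding t_def by (simp add: mult.commute)
      have "t < n"
      proof (rule ccontr)
        assume "\<not> t < n"
        then have "p * n \<le> p * t" by simp
        then show False using i it by (simp add: N_def)
      qed
      then have "zp p (D $ (p * t + r))" by (rule less)
      then show ?thesis using it assms(3) unfolding intg_def by (auto intro: zp_multI)
    qed
  qed
  moreover have "zp p (W $ N)" using Z by (simp add: N_def)
  ultimately have "zp p (W $ N - (\<Sum>i\<in>{0..<N}. D $ i * G $ (N - i)))" by (intro zp_diff)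
  then show ?case using split by (simp add: N_def)
qed

lemma f_eta_0[simp]: "f_eta r $ 0 = 1"
  by (simp add: f_eta_P P_def)

lemma nonsq:
  assumes "\<not> QuadRes (int p) (int r)" "k^2 + p * t = p * n + r"
  shows False
proof -
  have "k^2 mod p = (k^2 + p * t) mod p" by simp
  also have "\<dots> = (p * n + r) mod p" by (simp only: assms(2))
  also have "\<dots> = r mod p" by simp
  finally have "[k^2 = r] (mod p)" by (simp add: cong_def)
  then have "[int (k^2) = int r] (mod int p)" using cong_int_iff by blast
  then have "[(int k)^2 = int r] (mod int p)" by simp
  then show False using assms(1) unfolding QuadRes_def by blast
qed




theorem theorem4p3:
  fixes p :: nat and r :: nat and n :: nat
  assumes "prime p" and "p \<ge> 5"
    and "1 \<le> r" and "r \<le> p - 1"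
    and "\<not> QuadRes (int p) (int r)"
  shows "\<exists>m :: int. d (p - 1) (p * n + r) = of_int (int p * m)"
proof -
  have pr: "prime p" by fact
  have odd: "odd p"
  proof
    assume "even p"
    then have "2 dvd p" by simp
    moreover have "\<forall>m. m dvd p \<longrightarrow> m = 1 \<or> m = p" using pr by (simp add: prime_nat_iff)
    ultimately have "2 = p" by force
    then show False using assms(2) by simp
  qed
  have rp: "r < p" using assms(2,4) by simp
  define k where "k = p - 1"
  have pk: "p = Suc k" using assms(2) by (simp add: k_def)
  define F1 where "F1 = f_eta 1"
  define F2 where "F2 = f_eta 2"
  define D where "D = F2 ^ k * inverse (F1 ^ (3 * k + 1))"
  have dD: "d (p - 1) m = D $ m" for m by (simp add: d_def D_def F1_def F2_def k_def)
  have F10: "(F1 ^ (3 * k + 1)) $ 0 = 1" by (simp add: F1_def fps_power_zeroth_eq_one)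
  have hD: "D * F1 ^ (3 * k + 1) = F2 ^ k"
  proof -
    have "inverse (F1 ^ (3 * k + 1)) * F1 ^ (3 * k + 1) = 1"
      using F10 by (intro inverse_mult_eq_1) simp
    then show ?thesis unfolding D_def by (simp only: mult.assoc mult_1_right)
  qed
  have iD: "intg D"
    by (rule intg_quot[OF hD F10]) (simp_all only: F1_def F2_def intg_power intg_f_eta)
  define G where "G = f_eta (p * 1) ^ 3"
  define W where "W = D * G"
  have iG: "intg G" by (simp add: G_def intg_power)
  have ZW: "zp p (W $ (p * n' + r))" for n'
  proof -
    define N where "N = p * n' + r"
    have E1: "D * F1 ^ (p * 3) = F2 ^ k * F1 ^ 2"
    proof -
      have h: "p * 3 = (3 * k + 1) + 2" using pk by simp
      have "D * F1 ^ (p * 3) = (D * F1 ^ (3 * k + 1)) * F1 ^ 2" unfolding h power_add by (simp only: mult.assoc)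
      then show ?thesis unfolding hD .
    qed
    have fe1: "zc p (F1 ^ p) (f_eta (p * 1))" unfolding F1_def by (rule frob_eta[OF pr odd]) simp
    have "zc p ((F1 ^ p) ^ 3) G" unfolding G_def
      by (rule zc_power[OF fe1]) (auto simp: F1_def intro!: intg_power)
    then have z1: "zc p (D * F1 ^ (p * 3)) W" unfolding W_def power_mult
      by (intro zc_mult iD iG zc_refl)
    have t1: "tr N (F2 ^ k * F1 ^ 2) (F2 ^ k * (F2 * psi (2 * N)))"
      unfolding F1_def F2_def by (intro tr_mult tr_refl gauss_tr)
    have e2: "F2 ^ k * (F2 * psi (2 * N)) = F2 ^ p * psi (2 * N)"
      using pk by (simp add: mult_ac)
    have fe2: "zc p (F2 ^ p) (f_eta (p * 2))" unfolding F2_def by (rule frob_eta[OF pr odd]) simp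
    have z2: "zc p (F2 ^ p * psi (2 * N)) (f_eta (p * 2) * psi (2 * N))"
      by (intro zc_mult fe2 zc_refl) (auto simp: F2_def intro!: intg_power)
    have zero: "(f_eta (p * 2) * psi (2 * N)) $ N = 0"
      unfolding fps_mult_nth
    proof (rule sum.neutral, intro ballI)
      fix i assume i: "i \<in> {0..N}"
      show "f_eta (p * 2) $ i * psi (2 * N) $ (N - i) = 0"
      proof (cases "p dvd i")
        case False
        then show ?thesis using sp_f_eta[of p 2] by (simp add: sp_def)
      next
        case True
        then obtain t where t: "i = p * t" by (elim dvdE)
        have "psi (2 * N) $ (N - i) = 0"
        proof (rule psi_nth, rule notI)
          assume "\<exists>k. N - i = k^2"
          then obtain k where "N - i = k^2" by blast
          then have "k^2 + p * t = p * n' + r" using i t by (simp add: N_def)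
          then show False by (rule nonsq[OF assms(5)])
        qed
        then show ?thesis by simp
      qed
    qed
    have a: "zp p ((D * F1 ^ (p * 3) - W) $ N)" using z1 unfolding zc_def by blast
    have b: "(D * F1 ^ (p * 3)) $ N = (F2 ^ p * psi (2 * N)) $ N"
      using t1 unfolding E1[symmetric] e2 tr_def by simp
    have c: "zp p ((F2 ^ p * psi (2 * N)) $ N)"
      using z2 zero unfolding zc_def by (metis fps_sub_nth diff_zero)
    have "W $ N = (D * F1 ^ (p * 3)) $ N - (D * F1 ^ (p * 3) - W) $ N" by simp
    then have "zp p (W $ N)" using zp_diff[OF c a] unfolding b by simp
    then show ?thesis by (simp add: N_def)
  qed
  have "zp p (D $ (p * n + r))"
  proof (rule zp_quot[OF W_def _ iG iD _ rp ZW])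
    show "G $ 0 = 1" by (simp add: G_def fps_power_zeroth_eq_one)
    show "sp p G" unfolding G_def by (intro sp_power sp_f_eta)
  qed
  then show ?thesis unfolding dD zp_def .
qed


end
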